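(* Let $V$ be finite and let $\mathbb{M}=(M,A)$, $\mathbb{M}'=(M',A')$ be dependence models for $(V,\tau)$. A non-empty relation $Z\subseteq A\times A'$ is a dependence bisimulation if and only if for every $(s,s')\in Z$: (a) $s\models P\mathbf{x}$ iff $s'\models P\mathbf{x}$ for all $P\in\tau$, $\mathbf{x}\in V^{ar(P)}$; (b) $s\models D_Xy$ iff $s'\models D_Xy$ for all $X\cup\{y\}\subseteq V$; (c) for every $t\in A$ there is $t'\in A'$ with $s'=_{V^{s,t}}t'$ and $(t,t')\in Z$; (d) for every $t'\in A'$ there is $t\in A$ with $s=_{V^{s',t'}}t$ and $(t,t')\in Z$.
   Context: A vocabulary is a pair $(V,\tau)$ of a set of variables $V$ and a relational language $\tau$ with arity map $ar$. A dependence model is a pair $\mathbb{M}=(M,A)$ with $M$ a $\tau$-structure with domain $O$ and $A\subseteq O^V$ a set of assignments (the team). For $X\subseteq V$ and $s,t\in A$, $s=_Xt$ means $s\restriction X=t\restriction X$. Semantics at $s\in A$: $s\models P\mathbf{x}$ iff $s(\mathbf{x})\in P^M$; $s\models D_Xy$ iff for all $t\in A$, $s=_Xt$ implies $s(y)=t(y)$. For $s,t\in A$ let $V^{s,t}=\{v\in V\mid s(v)=t(v)\}$. A set $X\subseteq V$ is dependence-closed at $s'$ if for all $y\in V$, $s'\models D_Xy$ implies $y\in X$. A non-empty relation $Z\subseteq A\times A'$ is a dependence bisimulation if for every $(s,s')\in Z$: (Atom) $s\models P\mathbf{x}$ iff $s'\models P\mathbf{x}$ for all $P\in\tau$, $\mathbf{x}\in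 V^{ar(P)}$; (Forth) for every $t\in A$, $V^{s,t}$ is dependence-closed at $s'$ and there is $t'\in A'$ with $s'=_{V^{s,t}}t'$ and $(t,t')\in Z$; (Back) for every $t'\in A'$, $V^{s',t'}$ is dependence-closed at $s$ and there is $t\in A$ with $s=_{V^{s',t'}}t$ and $(t,t')\in Z$. *)

theory Defs
  imports Main "HOL-Library.FuncSet"
begin

(* A tau-structure: domain Dom :: 'o set, interpretation I :: 'p => 'o list set
   (I P is the relation P^M, a set of ar P-tuples represented as lists).
   Assignments are functions V -> Dom, represented extensionally (undefined outside V). *)

definition structure_on :: "'p set \<Rightarrow> ('p \<Rightarrow> nat) \<Rightarrow> 'o set \<Rightarrow> ('p \<Rightarrow> 'o list set) \<Rightarrow> bool" where
  "structure_on tau ar Dom I \<longleftrightarrow>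
     (\<forall>P\<in>tau. \<forall>os\<in>I P. length os = ar P \<and> set os \<subseteq> Dom)"

definition dep_model :: "'v set \<Rightarrow> 'p set \<Rightarrow> ('p \<Rightarrow> nat) \<Rightarrow> 'o set \<Rightarrow> ('p \<Rightarrow> 'o list set)
    \<Rightarrow> ('v \<Rightarrow> 'o) set \<Rightarrow> bool" where
  "dep_model V tau ar Dom I A \<longleftrightarrow> structure_on tau ar Dom I \<and> A \<subseteq> (V \<rightarrow>\<^sub>E Dom)"

definition sat_atom :: "('p \<Rightarrow> 'o list set) \<Rightarrow> ('v \<Rightarrow> 'o) \<Rightarrow> 'p \<Rightarrow> 'v list \<Rightarrow> bool" where
  "sat_atom I s P xs \<longleftrightarrow> map s xs \<in> I P"

definition agree_on :: "'v set \<Rightarrow> ('v \<Rightarrow> 'o) \<Rightarrow> ('v \<Rightarrow> 'o) \<Rightarrow> bool" where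
  "agree_on X s t \<longleftrightarrow> (\<forall>v\<in>X. s v = t v)"

definition sat_dep :: "('v \<Rightarrow> 'o) set \<Rightarrow> ('v \<Rightarrow> 'o) \<Rightarrow> 'v set \<Rightarrow> 'v \<Rightarrow> bool" where
  "sat_dep A s X y \<longleftrightarrow> (\<forall>t\<in>A. agree_on X s t \<longrightarrow> s y = t y)"

definition agree_set :: "'v set \<Rightarrow> ('v \<Rightarrow> 'o) \<Rightarrow> ('v \<Rightarrow> 'o) \<Rightarrow> 'v set" where
  "agree_set V s t = {v\<in>V. s v = t v}"

definition dep_closed :: "'v set \<Rightarrow> ('v \<Rightarrow> 'o) set \<Rightarrow> 'v set \<Rightarrow> ('v \<Rightarrow> 'o) \<Rightarrow> bool" where
  "dep_closed V A X s \<longleftrightarrow> (\<forall>y\<in>V. sat_dep A s X y \<longrightarrow> y \<in> X)"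

definition atom_cond :: "'v set \<Rightarrow> 'p set \<Rightarrow> ('p \<Rightarrow> nat) \<Rightarrow> ('p \<Rightarrow> 'o list set) \<Rightarrow> ('p \<Rightarrow> 'o2 list set)
    \<Rightarrow> ('v \<Rightarrow> 'o) \<Rightarrow> ('v \<Rightarrow> 'o2) \<Rightarrow> bool" where
  "atom_cond V tau ar I I' s s' \<longleftrightarrow>
     (\<forall>P\<in>tau. \<forall>xs. set xs \<subseteq> V \<and> length xs = ar P \<longrightarrow> (sat_atom I s P xs \<longleftrightarrow> sat_atom I' s' P xs))"

definition dep_bisim :: "'v set \<Rightarrow> 'p set \<Rightarrow> ('p \<Rightarrow> nat)
    \<Rightarrow> ('p \<Rightarrow> 'o list set) \<Rightarrow> ('v \<Rightarrow> 'o) set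
    \<Rightarrow> ('p \<Rightarrow> 'o2 list set) \<Rightarrow> ('v \<Rightarrow> 'o2) set
    \<Rightarrow> (('v \<Rightarrow> 'o) \<times> ('v \<Rightarrow> 'o2)) set \<Rightarrow> bool" where
  "dep_bisim V tau ar I A I' A' Z \<longleftrightarrow>
     Z \<noteq> {} \<and> Z \<subseteq> A \<times> A' \<and>
     (\<forall>(s, s')\<in>Z.
        atom_cond V tau ar I I' s s' \<and>
        (\<forall>t\<in>A. dep_closed V A' (agree_set V s t) s' \<and>
                (\<exists>t'\<in>A'. agree_on (agree_set V s t) s' t' \<and> (t, t') \<in> Z)) \<and>
        (\<forall>t'\<in>A'. dep_closed V A (agree_set V s' t') s \<and>
                (\<exists>t\<in>A. agree_on (agree_set V s' t') s t \<and> (t, t') \<in> Z)))"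

end

theory Submission
  imports Defs
begin

theorem mainTheorem2:
  fixes V :: "'v set" and tau :: "'p set" and ar :: "'p \<Rightarrow> nat"
    and Dom :: "'o set" and I :: "'p \<Rightarrow> 'o list set" and A :: "('v \<Rightarrow> 'o) set"
    and Dom' :: "'o2 set" and I' :: "'p \<Rightarrow> 'o2 list set" and A' :: "('v \<Rightarrow> 'o2) set"
    and Z :: "(('v \<Rightarrow> 'o) \<times> ('v \<Rightarrow> 'o2)) set"
  assumes "finite V"
    and "dep_model V tau ar Dom I A"
    and "dep_model V tau ar Dom' I' A'"
    and "Z \<noteq> {}" and "Z \<subseteq> A \<times> A'"
  shows "dep_bisim V tau ar I A I' A' Z \<longleftrightarrow>
    (\<forall>(s, s')\<in>Z.
       atom_cond V tau ar I I' s s' \<and>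
       (\<forall>X y. X \<union> {y} \<subseteq> V \<longrightarrow> (sat_dep A s X y \<longleftrightarrow> sat_dep A' s' X y)) \<and>
       (\<forall>t\<in>A. \<exists>t'\<in>A'. agree_on (agree_set V s t) s' t' \<and> (t, t') \<in> Z) \<and>
       (\<forall>t'\<in>A'. \<exists>t\<in>A. agree_on (agree_set V s' t') s t \<and> (t, t') \<in> Z))"
proof
  assume B: "dep_bisim V tau ar I A I' A' Z"
  show "\<forall>(s, s')\<in>Z.
       atom_cond V tau ar I I' s s' \<and>
       (\<forall>X y. X \<union> {y} \<subseteq> V \<longrightarrow> (sat_dep A s X y \<longleftrightarrow> sat_dep A' s' X y)) \<and>
       (\<forall>t\<in>A. \<exists>t'\<in>A'. agree_on (agree_set V s t) s' t' \<and> (t, t') \<in> Z) \<and>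
       (\<forall>t'\<in>A'. \<exists>t\<in>A. agree_on (agree_set V s' t') s t \<and> (t, t') \<in> Z)"
  proof (clarify)
    fix s s' assume sZ: "(s, s') \<in> Z"
    have C: "atom_cond V tau ar I I' s s' \<and>
        (\<forall>t\<in>A. dep_closed V A' (agree_set V s t) s' \<and>
                (\<exists>t'\<in>A'. agree_on (agree_set V s t) s' t' \<and> (t, t') \<in> Z)) \<and>
        (\<forall>t'\<in>A'. dep_closed V A (agree_set V s' t') s \<and>
                (\<exists>t\<in>A. agree_on (agree_set V s' t') s t \<and> (t, t') \<in> Z))"
      using B sZ unfolding dep_bisim_def by blast
    have D: "sat_dep A s X y \<longleftrightarrow> sat_dep A' s' X y" if XV: "X \<union> {y} \<subseteq> V" for X y
    proof
      assume d: "sat_dep A s X y"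
      show "sat_dep A' s' X y"
      proof (rule ccontr)
        assume "\<not> sat_dep A' s' X y"
        then obtain t' where t': "t' \<in> A'" "agree_on X s' t'" "s' y \<noteq> t' y"
          unfolding sat_dep_def by blast
        have cl: "dep_closed V A (agree_set V s' t') s" using C t' by blast
        have yn: "y \<notin> agree_set V s' t'" using t' unfolding agree_set_def by simp
        have "\<not> sat_dep A s (agree_set V s' t') y" using cl yn XV unfolding dep_closed_def by blast
        then obtain u where "u \<in> A" "agree_on (agree_set V s' t') s u" "s y \<noteq> u y"
          unfolding sat_dep_def by blast
        moreover have "X \<subseteq> agree_set V s' t'" using t' XV unfolding agree_on_def agree_set_def by auto
        ultimately show False using d unfolding sat_dep_def agree_on_def by blast
      qed
    next
      assume d: "sat_dep A' s' X y"
      show "sat_dep A s X y"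
      proof (rule ccontr)
        assume "\<not> sat_dep A s X y"
        then obtain t where t: "t \<in> A" "agree_on X s t" "s y \<noteq> t y"
          unfolding sat_dep_def by blast
        have cl: "dep_closed V A' (agree_set V s t) s'" using C t by blast
        have yn: "y \<notin> agree_set V s t" using t unfolding agree_set_def by simp
        have "\<not> sat_dep A' s' (agree_set V s t) y" using cl yn XV unfolding dep_closed_def by blast
        then obtain u where "u \<in> A'" "agree_on (agree_set V s t) s' u" "s' y \<noteq> u y"
          unfolding sat_dep_def by blast
        moreover have "X \<subseteq> agree_set V s t" using t XV unfolding agree_on_def agree_set_def by auto
        ultimately show False using d unfolding sat_dep_def agree_on_def by blast
      qed
    qed
    show "atom_cond V tau ar I I' s s' \<and>
       (\<forall>X y. X \<union> {y} \<subseteq> V \<longrightarrow> (sat_dep A s X y \<longleftrightarrow> sat_dep A' s' X y)) \<and>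
       (\<forall>t\<in>A. \<exists>t'\<in>A'. agree_on (agree_set V s t) s' t' \<and> (t, t') \<in> Z) \<and>
       (\<forall>t'\<in>A'. \<exists>t\<in>A. agree_on (agree_set V s' t') s t \<and> (t, t') \<in> Z)"
      using C D by blast
  qed
next
  assume R: "\<forall>(s, s')\<in>Z.
       atom_cond V tau ar I I' s s' \<and>
       (\<forall>X y. X \<union> {y} \<subseteq> V \<longrightarrow> (sat_dep A s X y \<longleftrightarrow> sat_dep A' s' X y)) \<and>
       (\<forall>t\<in>A. \<exists>t'\<in>A'. agree_on (agree_set V s t) s' t' \<and> (t, t') \<in> Z) \<and>
       (\<forall>t'\<in>A'. \<exists>t\<in>A. agree_on (agree_set V s' t') s t \<and> (t, t') \<in> Z)"
  have S: "agree_set V s t \<subseteq> V" for s t :: "'v \<Rightarrow> 'x" unfolding agree_set_def by auto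
  show "dep_bisim V tau ar I A I' A' Z"
    unfolding dep_bisim_def
  proof (intro conjI assms(4) assms(5) ballI, clarify)
    fix s s' assume sZ: "(s, s') \<in> Z"
    have sA: "s \<in> A" "s' \<in> A'" using sZ assms(5) by auto
    have R1: "atom_cond V tau ar I I' s s'"
      and R2: "\<And>X y. X \<union> {y} \<subseteq> V \<Longrightarrow> (sat_dep A s X y \<longleftrightarrow> sat_dep A' s' X y)"
      and R3: "\<forall>t\<in>A. \<exists>t'\<in>A'. agree_on (agree_set V s t) s' t' \<and> (t, t') \<in> Z"
      and R4: "\<forall>t'\<in>A'. \<exists>t\<in>A. agree_on (agree_set V s' t') s t \<and> (t, t') \<in> Z"
      using R sZ by auto
    have c1: "dep_closed V A' (agree_set V s t) s'" if t: "t \<in> A" for t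
      unfolding dep_closed_def
    proof (intro ballI impI)
      fix y assume yV: "y \<in> V" and d: "sat_dep A' s' (agree_set V s t) y"
      have "sat_dep A s (agree_set V s t) y" using R2[of "agree_set V s t" y] d yV S by blast
      then have "s y = t y" using t unfolding sat_dep_def agree_on_def agree_set_def by auto
      then show "y \<in> agree_set V s t" using yV unfolding agree_set_def by auto
    qed
    have c2: "dep_closed V A (agree_set V s' t') s" if t: "t' \<in> A'" for t'
      unfolding dep_closed_def
    proof (intro ballI impI)
      fix y assume yV: "y \<in> V" and d: "sat_dep A s (agree_set V s' t') y"
      have "sat_dep A' s' (agree_set V s' t') y" using R2[of "agree_set V s' t'" y] d yV S by blast
      then have "s' y = t' y" using t unfolding sat_dep_def agree_on_def agree_set_def by auto
      then show "y \<in> agree_set V s' t'" using yV unfolding agree_set_def by auto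
    qed
    show "atom_cond V tau ar I I' s s' \<and>
        (\<forall>t\<in>A. dep_closed V A' (agree_set V s t) s' \<and>
                (\<exists>t'\<in>A'. agree_on (agree_set V s t) s' t' \<and> (t, t') \<in> Z)) \<and>
        (\<forall>t'\<in>A'. dep_closed V A (agree_set V s' t') s \<and>
                (\<exists>t\<in>A. agree_on (agree_set V s' t') s t \<and> (t, t') \<in> Z))"
      using R1 R3 R4 c1 c2 by blast
  qed
qed

end
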